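(* Let $n\ge1$. Averaged over all quasi-Stirling permutations of size $n$, the mean number of ascents is $(3n+1)/4$, the mean number of descents is $(3n+1)/4$, and the mean number of plateaus is $(n+1)/2$.
   Context: A quasi-Stirling permutation of size $n$ is a permutation $\pi_1\cdots\pi_{2n}$ of the multiset $\{1,1,2,2,\dots,n,n\}$ with no indices $i<j<k<\ell$ such that $\pi_i=\pi_k$ and $\pi_j=\pi_\ell$. For a sequence $\pi_1\cdots\pi_r$: $i\in\{1,\dots,r\}$ is a descent if $\pi_i>\pi_{i+1}$ or $i=r$; $i\in\{0,\dots,r-1\}$ is an ascent if $i=0$ or $\pi_i<\pi_{i+1}$; $i\in\{1,\dots,r-1\}$ is a plateau if $\pi_i=\pi_{i+1}$. *)

theory Defs
  imports Complex_Main "HOL-Library.Multiset"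
begin

text \<open>Sequences are lists; the informal 1-based entry pi_i is xs ! (i - 1).\<close>

definition quasi_stirling :: "nat \<Rightarrow> nat list \<Rightarrow> bool" where
  "quasi_stirling n xs \<longleftrightarrow>
     mset xs = mset ([1..<n+1] @ [1..<n+1]) \<and>
     \<not> (\<exists>i j k l. i < j \<and> j < k \<and> k < l \<and> l < length xs \<and>
            xs ! i = xs ! k \<and> xs ! j = xs ! l)"

definition QS :: "nat \<Rightarrow> nat list set" where
  "QS n = {xs. quasi_stirling n xs}"

definition des :: "nat list \<Rightarrow> nat" where
  "des xs = card {i \<in> {1..length xs}.
      i = length xs \<or> xs ! (i - 1) > xs ! i}"

definition asc :: "nat list \<Rightarrow> nat" where
  "asc xs = card {i \<in> {0..<length xs}.
      i = 0 \<or> xs ! (i - 1) < xs ! i}"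

definition plat :: "nat list \<Rightarrow> nat" where
  "plat xs = card {i \<in> {1..<length xs}. xs ! (i - 1) = xs ! i}"

end

theory Submission
  imports Defs
begin


definition crs :: "nat list \<Rightarrow> bool" where
  "crs xs \<longleftrightarrow> (\<exists>i j k l. i < j \<and> j < k \<and> k < l \<and> l < length xs \<and>
            xs ! i = xs ! k \<and> xs ! j = xs ! l)"

lemma crs_right: "crs p \<Longrightarrow> crs (q @ p)"
proof -
  assume "crs p"
  then obtain i j k l where h: "i < j" "j < k" "k < l" "l < length p" "p ! i = p ! k" "p ! j = p ! l"
    unfolding crs_def by blast
  show ?thesis unfolding crs_def
    by (rule exI[of _ "i + length q"], rule exI[of _ "j + length q"], rule exI[of _ "k + length q"],
        rule exI[of _ "l + length q"]) (use h in \<open>simp add: nth_append\<close>)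
qed

lemma crs_left: "crs p \<Longrightarrow> crs (p @ q)"
proof -
  assume "crs p"
  then obtain i j k l where h: "i < j" "j < k" "k < l" "l < length p" "p ! i = p ! k" "p ! j = p ! l"
    unfolding crs_def by blast
  show ?thesis unfolding crs_def
    by (rule exI[of _ i], rule exI[of _ j], rule exI[of _ k],
        rule exI[of _ l]) (use h in \<open>simp add: nth_append\<close>)
qed

lemma crs_app: assumes "crs (p @ q)" "set p \<inter> set q = {}" shows "crs p \<or> crs q"
proof -
  obtain i j k l where h: "i < j" "j < k" "k < l" "l < length (p@q)"
     "(p@q) ! i = (p@q) ! k" "(p@q) ! j = (p@q) ! l"
    using assms(1) unfolding crs_def by blast
  define m where "m = length p"
  consider "l < m" | "m \<le> i" | "i < m" "m \<le> l" by linarith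
  then show ?thesis
  proof cases
    case 1
    then show ?thesis using h unfolding crs_def m_def by (auto simp: nth_append) 
  next
    case 2
    then have "crs q" unfolding crs_def
      by (rule_tac exI[of _ "i - m"], rule_tac exI[of _ "j - m"], rule_tac exI[of _ "k - m"],
        rule_tac exI[of _ "l - m"]) (use h in \<open>auto simp add: nth_append m_def\<close>)
    then show ?thesis by blast
  next
    case 3
    show ?thesis
    proof (cases "k < m")
      case True
      then have "p ! j = q ! (l - m)" using h 3 by (auto simp: nth_append m_def)
      moreover have "p ! j \<in> set p" using h True m_def by auto
      moreover have "q ! (l - m) \<in> set q" using h 3 m_def by auto
      ultimately show ?thesis using assms(2) by auto
    next
      case False
      then have "p ! i = q ! (k - m)" using h 3 by (auto simp: nth_append m_def)
      moreover have "p ! i \<in> set p" using h 3 m_def by auto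
      moreover have "q ! (k - m) \<in> set q" using h False m_def by auto
      ultimately show ?thesis using assms(2) by auto
    qed
  qed
qed

lemma crs_wrap: assumes "crs (a # u @ [a])" "a \<notin> set u" shows "crs u"
proof -
  define w where "w = a # u @ [a]"
  define m where "m = length u"
  obtain i j k l where h: "i < j" "j < k" "k < l" "l < length w"
     "w ! i = w ! k" "w ! j = w ! l"
    using assms(1) unfolding crs_def w_def by blast
  have lw: "length w = m + 2" by (simp add: w_def m_def)
  have mid: "1 \<le> t \<Longrightarrow> t \<le> m \<Longrightarrow> w ! t = u ! (t - 1)" for t
    by (cases t) (auto simp: w_def m_def nth_append)
  have midn: "1 \<le> t \<Longrightarrow> t \<le> m \<Longrightarrow> w ! t \<noteq> a" for t
    using mid[of t] assms(2) m_def by (metis diff_less le_less_trans less_one nat_less_le nth_mem not_less)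
  have w0: "w ! 0 = a" by (simp add: w_def)
  have wl: "w ! (m+1) = a" by (simp add: w_def m_def nth_append)
  have i1: "i \<ge> 1"
  proof (rule ccontr)
    assume "\<not> 1 \<le> i" then have "i = 0" by simp
    then have "w ! k = a" using h w0 by simp
    then have "k = m + 1" using midn[of k] h lw by (cases "k \<le> m") auto
    then show False using h lw by simp
  qed
  have lm: "l \<le> m"
  proof (rule ccontr)
    assume "\<not> l \<le> m" then have "l = m + 1" using h lw by simp
    then have "w ! j = a" using h wl by simp
    then show False using midn[of j] h i1 \<open>l = m+1\<close> by simp
  qed
  show ?thesis unfolding crs_def
    by (rule exI[of _ "i - 1"], rule exI[of _ "j - 1"], rule exI[of _ "k - 1"],
        rule exI[of _ "l - 1"]) (use h i1 lm mid m_def in \<open>auto\<close>)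
qed


definition QSS :: "nat set \<Rightarrow> nat list set" where
  "QSS S = {xs. mset xs = mset_set S + mset_set S \<and> \<not> crs xs}"

lemma msetS_iff: assumes "finite S" shows "mset xs = mset_set S + mset_set S \<longleftrightarrow> (\<forall>y. count (mset xs) y = (if y \<in> S then 2 else 0))"
proof -
  have c: "\<And>y. count (mset_set S + mset_set S) y = (if y\<in>S then 2 else 0)" using assms by (simp add: count_mset_set)
  show ?thesis by (simp only: multiset_eq_iff c)
qed

lemma QSS_set: assumes "finite S" "xs \<in> QSS S" shows "set xs = S"
proof -
  have h: "mset xs = mset_set S + mset_set S" using assms(2) unfolding QSS_def by blast
  have "set xs = set_mset (mset xs)" by simp
  also have "\<dots> = set_mset (mset_set S + mset_set S)" using h by simp
  also have "\<dots> = S" using assms(1) by simp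
  finally show ?thesis .
qed

lemma QSS_len: assumes "finite S" "xs \<in> QSS S" shows "length xs = 2 * card S"
proof -
  have h: "mset xs = mset_set S + mset_set S" using assms(2) unfolding QSS_def by blast
  have "length xs = size (mset xs)" by simp
  also have "\<dots> = size (mset_set S + mset_set S)" using h by simp
  also have "\<dots> = 2 * card S" by simp
  finally show ?thesis .
qed

lemma QSS_finite: assumes "finite S" shows "finite (QSS S)"
proof -
  have "QSS S \<subseteq> {xs. set xs \<subseteq> S \<and> length xs = 2 * card S}"
    using QSS_set QSS_len assms by auto
  then show ?thesis using finite_lists_length_eq[OF assms] finite_subset by blast
qed

lemma QSS_empty: "QSS {} = {[]}"
  unfolding QSS_def crs_def by auto

lemma QSS_Nil_iff: "finite A \<Longrightarrow> u \<in> QSS A \<Longrightarrow> u = [] \<longleftrightarrow> A = {}"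
  using QSS_set by fastforce

lemma build:
  assumes fin: "finite S" and a: "a \<in> S" and A: "A \<subseteq> S - {a}" and u: "u \<in> QSS A"
    and v: "v \<in> QSS (S - {a} - A)"
  shows "a # u @ a # v \<in> QSS S"
proof -
  have fA: "finite A" using fin A finite_subset by blast
  have fB: "finite (S - {a} - A)" using fin by simp
  have su: "set u = A" using QSS_set[OF fA u] .
  have sv: "set v = S - {a} - A" using QSS_set[OF fB v] .
  have cu: "\<forall>y. count (mset u) y = (if y \<in> A then 2 else 0)" using u fA msetS_iff unfolding QSS_def by blast
  have cv: "\<forall>y. count (mset v) y = (if y \<in> S - {a} - A then 2 else 0)" using v fB msetS_iff unfolding QSS_def by blast
  have "mset (a # u @ a # v) = mset_set S + mset_set S"
    unfolding msetS_iff[OF fin]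
  proof
    fix y
    show "count (mset (a # u @ a # v)) y = (if y \<in> S then 2 else 0)"
      using cu cv A a by (auto simp: count_add_mset)
  qed
  moreover have "\<not> crs (a # u @ a # v)"
  proof
    assume "crs (a # u @ a # v)"
    then have "crs ((a # u @ [a]) @ v)" by simp
    then have "crs (a # u @ [a]) \<or> crs v" by (rule crs_app) (use su sv A in auto)
    then have "crs u \<or> crs v" using crs_wrap su A by blast
    then show False using u v unfolding QSS_def by blast
  qed
  ultimately show ?thesis unfolding QSS_def by blast
qed

lemma decomp:
  assumes fin: "finite S" and xs: "xs \<in> QSS S" and ne: "S \<noteq> {}"
  shows "\<exists>a A u v. a \<in> S \<and> A \<subseteq> S - {a} \<and> u \<in> QSS A \<and> v \<in> QSS (S - {a} - A) \<and> xs = a # u @ a # v"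
proof -
  have cx: "\<forall>y. count (mset xs) y = (if y \<in> S then 2 else 0)" using xs fin msetS_iff unfolding QSS_def by blast
  have ncx: "\<not> crs xs" using xs unfolding QSS_def by blast
  have "xs \<noteq> []" using QSS_set[OF fin xs] ne by auto
  then obtain a t where xt: "xs = a # t" by (cases xs) auto
  have aS: "a \<in> S" using QSS_set[OF fin xs] xt by auto
  have "count (mset t) a = 1" using cx[rule_format, of a] aS xt by simp
  then have "a \<in> set t" by (metis count_eq_zero_iff one_neq_zero set_mset_mset)
  then obtain u v where t: "t = u @ a # v" and au: "a \<notin> set u" by (meson split_list_first)
  have xuv: "xs = a # u @ a # v" using xt t by simp
  have av: "a \<notin> set v" using \<open>count (mset t) a = 1\<close> t au by (simp add: count_eq_zero_iff)
  have disj: "set u \<inter> set v = {}"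
  proof (rule ccontr)
    assume "set u \<inter> set v \<noteq> {}"
    then obtain y where "y \<in> set u" "y \<in> set v" by blast
    then obtain j l where j: "j < length u" "u ! j = y" and l: "l < length v" "v ! l = y"
      by (meson in_set_conv_nth)
    have e1: "xs ! 0 = a" using xuv by simp
    have e2: "xs ! (j+1) = y" using xuv j by (simp add: nth_append)
    have e3: "xs ! (length u + 1) = a" using xuv by (simp add: nth_append)
    have e4: "xs ! (length u + 2 + l) = y" using xuv l by (simp add: nth_append)
    have e5: "length u + 2 + l < length xs" using xuv l by simp
    have "crs xs" unfolding crs_def
      by (rule exI[of _ 0], rule exI[of _ "j+1"], rule exI[of _ "length u + 1"],
        rule exI[of _ "length u + 2 + l"]) (use j e1 e2 e3 e4 e5 in simp)
    then show False using ncx by blast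
  qed
  define A where "A = set u"
  have sxs: "set xs = S" using QSS_set[OF fin xs] .
  have AS: "A \<subseteq> S - {a}" using sxs xuv au A_def by auto
  have setv: "set v = S - {a} - A" using sxs xuv au av disj A_def by auto
  have fA: "finite A" unfolding A_def by simp
  have fB: "finite (S - {a} - A)" using fin by simp
  have "\<not> crs u"
  proof
    assume "crs u"
    then have "crs ([a] @ (u @ (a # v)))" by (intro crs_right crs_left)
    then show False using ncx xuv by simp
  qed
  moreover have "mset u = mset_set A + mset_set A" unfolding msetS_iff[OF fA]
  proof
    fix y
    show "count (mset u) y = (if y \<in> A then 2 else 0)"
    proof (cases "y \<in> A")
      case True
      then have "y \<notin> set v" "y \<noteq> a" using disj au A_def by auto
      have c0: "count (mset v) y = 0" using \<open>y \<notin> set v\<close> by (metis count_mset_0_iff)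
      have c1: "count (mset xs) y = count (mset u) y + count (mset v) y" using xuv \<open>y \<noteq> a\<close> by simp
      have c2: "count (mset xs) y = 2" using cx True AS by auto
      have "count (mset u) y = 2" using c0 c1 c2 by linarith
      then show ?thesis using True by simp
    next
      case False
      then have "y \<notin> set u" using A_def by simp
      then have c: "count (mset u) y = 0" by (metis count_mset_0_iff)
      show ?thesis by (simp only: c if_not_P[OF False])
    qed
  qed
  ultimately have uQ: "u \<in> QSS A" unfolding QSS_def by blast
  have "\<not> crs v"
  proof
    assume "crs v"
    then have "crs ((a # u @ [a]) @ v)" by (intro crs_right)
    then show False using ncx xuv by simp
  qed
  moreover have "mset v = mset_set (S - {a} - A) + mset_set (S - {a} - A)" unfolding msetS_iff[OF fB]
  proof
    fix y
    show "count (mset v) y = (if y \<in> S - {a} - A then 2 else 0)"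
    proof (cases "y \<in> S - {a} - A")
      case True
      then have "y \<notin> set u" "y \<noteq> a" using A_def by auto
      have c0: "count (mset u) y = 0" using \<open>y \<notin> set u\<close> by (metis count_mset_0_iff)
      have c1: "count (mset xs) y = count (mset u) y + count (mset v) y" using xuv \<open>y \<noteq> a\<close> by simp
      have c2: "count (mset xs) y = 2" using cx True by auto
      have "count (mset v) y = 2" using c0 c1 c2 by linarith
      then show ?thesis using True by simp
    next
      case False
      then have "y \<notin> set v" using setv by simp
      then have c: "count (mset v) y = 0" by (metis count_mset_0_iff)
      show ?thesis by (simp only: c if_not_P[OF False])
    qed
  qed
  ultimately have vQ: "v \<in> QSS (S - {a} - A)" unfolding QSS_def by blast
  show ?thesis using aS AS uQ vQ xuv by blast
qed


lemma sum_decomp: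
  assumes fin: "finite S" and ne: "S \<noteq> {}"
  shows "sum f (QSS S) = (\<Sum>a\<in>S. \<Sum>A\<in>Pow (S-{a}). \<Sum>u\<in>QSS A. \<Sum>v\<in>QSS (S-{a}-A). f (a # u @ a # v))"
proof -
  define I where "I = (SIGMA a:S. SIGMA A:Pow (S-{a}). QSS A \<times> QSS (S-{a}-A))"
  define g where "g = (\<lambda>(a::nat, A::nat set, u::nat list, v::nat list). a # u @ a # v)"
  have inj: "inj_on g I"
  proof (rule inj_onI)
    fix x y assume x: "x \<in> I" and y: "y \<in> I" and e: "g x = g y"
    obtain a A u v where xd: "x = (a, A, u, v)" by (cases x) auto
    obtain a' A' u' v' where yd: "y = (a', A', u', v')" by (cases y) auto
    have fA: "finite A" "finite A'" using x y fin xd yd I_def finite_subset by auto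
    have su: "set u = A" using x xd I_def QSS_set[OF fA(1)] by auto
    have su': "set u' = A'" using y yd I_def QSS_set[OF fA(2)] by auto
    have aa: "a = a'" using e xd yd g_def by simp
    have au: "a \<notin> set u" "a \<notin> set u'" using x y xd yd I_def su su' aa by auto
    have "u @ a # v = u' @ a # v'" using e xd yd g_def aa by simp
    moreover have "a \<notin> set v"
    proof -
      have "finite (S - {a} - A)" using fin by simp
      then have "set v = S - {a} - A" using x xd I_def QSS_set by auto
      then show ?thesis by auto
    qed
    ultimately have "u = u' \<and> v = v'" using append_Cons_eq_iff[of a u v u' v'] au by simp
    then have "u = u'" "v = v'" by auto
    then show "x = y" using xd yd aa su su' by simp
  qed
  have img: "g ` I = QSS S"
  proof
    show "g ` I \<subseteq> QSS S" using build[OF fin] unfolding I_def g_def by auto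
    show "QSS S \<subseteq> g ` I"
    proof
      fix xs assume "xs \<in> QSS S"
      then obtain a A u v where h: "a \<in> S" "A \<subseteq> S - {a}" "u \<in> QSS A" "v \<in> QSS (S - {a} - A)" "xs = a # u @ a # v"
        using decomp[OF fin _ ne] by blast
      then have "(a, A, u, v) \<in> I" unfolding I_def by auto
      then show "xs \<in> g ` I" using h g_def by force
    qed
  qed
  have r0: "sum f (QSS S) = sum (f \<circ> g) I" using sum.reindex[OF inj, of f] img by simp
  define F where "F (a::nat) (A::nat set) (u::nat list) (v::nat list) = f (a # u @ a # v)" for a A u v
  have fI: "\<forall>a\<in>S. finite (SIGMA A:Pow (S-{a}). QSS A \<times> QSS (S-{a}-A))"
    using fin by (auto intro!: finite_SigmaI finite_cartesian_product QSS_finite dest: finite_subset)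
  have fI2: "\<forall>A\<in>Pow (S-{a}). finite (QSS A \<times> QSS (S-{a}-A))" for a
    using fin by (auto intro!: finite_cartesian_product QSS_finite dest: finite_subset)
  have "sum (f \<circ> g) I = sum (\<lambda>(a, t). (\<lambda>(A, u, v). F a A u v) t) I"
    by (rule sum.cong) (auto simp: g_def F_def split: prod.splits)
  also have "\<dots> = (\<Sum>a\<in>S. sum (\<lambda>(A, u, v). F a A u v) (SIGMA A:Pow (S-{a}). QSS A \<times> QSS (S-{a}-A)))"
    unfolding I_def by (rule sum.Sigma[symmetric]) (use fin fI in auto)
  also have "\<dots> = (\<Sum>a\<in>S. \<Sum>A\<in>Pow (S-{a}). sum (\<lambda>(u, v). F a A u v) (QSS A \<times> QSS (S-{a}-A)))"
    by (rule sum.cong[OF refl], rule sum.Sigma[symmetric]) (use fin fI2 in auto)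
  also have "\<dots> = (\<Sum>a\<in>S. \<Sum>A\<in>Pow (S-{a}). \<Sum>u\<in>QSS A. \<Sum>v\<in>QSS (S-{a}-A). F a A u v)"
    by (simp only: sum.cartesian_product)
  finally show ?thesis unfolding F_def using r0 by simp
qed

fun plat' :: "nat list \<Rightarrow> nat" where
  "plat' [] = 0" | "plat' [x] = 0" | "plat' (x # y # r) = (if x = y then 1 else 0) + plat' (y # r)"

lemma plat'_cons: "plat' (x # q) = plat' q + (if q \<noteq> [] \<and> x = hd q then 1 else 0)"
  by (cases q) auto

lemma plat'_app: "plat' (p @ q) = plat' p + plat' q + (if p \<noteq> [] \<and> q \<noteq> [] \<and> last p = hd q then 1 else 0)"
  by (induction p) (auto simp: plat'_cons)

lemma card_cons_gen:
  "card {i \<in> {1..<length (x # xs)}. P ((x # xs) ! (i - 1)) ((x # xs) ! i)}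
   = (if xs \<noteq> [] \<and> P x (hd xs) then 1 else 0) + card {i \<in> {1..<length xs}. P (xs ! (i - 1)) (xs ! i)}"
proof -
  define T where "T = {i \<in> {1..<length xs}. P (xs ! (i - 1)) (xs ! i)}"
  have "{i \<in> {1..<length (x # xs)}. P ((x # xs) ! (i - 1)) ((x # xs) ! i)}
        = (if xs \<noteq> [] \<and> P x (hd xs) then {1} else {}) \<union> Suc ` T"
  proof (intro set_eqI iffI)
    fix i assume "i \<in> {i \<in> {1..<length (x # xs)}. P ((x # xs) ! (i - 1)) ((x # xs) ! i)}"
    then show "i \<in> (if xs \<noteq> [] \<and> P x (hd xs) then {1} else {}) \<union> Suc ` T"
      unfolding T_def by (cases i; cases "i - 1") (auto simp: hd_conv_nth image_iff)
  next
    fix i assume "i \<in> (if xs \<noteq> [] \<and> P x (hd xs) then {1} else {}) \<union> Suc ` T"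
    then show "i \<in> {i \<in> {1..<length (x # xs)}. P ((x # xs) ! (i - 1)) ((x # xs) ! i)}"
      unfolding T_def by (cases xs) (auto split: if_splits simp: nth_Cons')
  qed
  moreover have "card (Suc ` T) = card T" by (simp add: card_image)
  moreover have "1 \<notin> Suc ` T" unfolding T_def by auto
  moreover have "finite T" unfolding T_def by simp
  ultimately show ?thesis unfolding T_def[symmetric] by (auto simp: card_insert_if)
qed

lemma plat_eq: "plat xs = plat' xs"
proof (induction xs)
  case Nil
  then show ?case by (simp add: plat_def)
next
  case (Cons x xs)
  then show ?case unfolding plat_def using card_cons_gen[where P="\<lambda>a b. a = b" and x=x and xs=xs]
    by (simp add: plat'_cons)
qed



lemma QSS_nonempty: "finite S \<Longrightarrow> QSS S \<noteq> {}"
proof (induction S rule: finite_induct)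
  case empty
  then show ?case by (simp add: QSS_empty)
next
  case (insert a F)
  then obtain v where v: "v \<in> QSS F" by blast
  have e: "insert a F - {a} - {} = F" using insert by auto
  have "a # [] @ a # v \<in> QSS (insert a F)"
    using build[of "insert a F" a "{}" "[]" v] insert v e by (simp add: QSS_empty)
  then show ?case by blast
qed

lemma plat'_split:
  assumes "a \<notin> set u" "a \<notin> set v"
  shows "plat' (a # u @ a # v) = plat' u + plat' v + (if u = [] then 1 else 0)"
proof -
  have "a # u @ a # v = (a # u) @ (a # v)" by simp
  then have "plat' (a # u @ a # v) = plat' (a # u) + plat' (a # v) + (if last (a # u) = a then 1 else 0)"
    using plat'_app[of "a # u" "a # v"] by simp
  moreover have "plat' (a # u) = plat' u" using assms(1) by (cases u) (auto simp: plat'_cons)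
  moreover have "plat' (a # v) = plat' v" using assms(2) by (cases v) (auto simp: plat'_cons)
  moreover have "(last (a # u) = a) = (u = [])"
  proof (cases "u = []")
    case True
    then show ?thesis by simp
  next
    case False
    then have "last (a # u) = last u" by simp
    moreover have "last u \<in> set u" using False by (rule last_in_set)
    ultimately show ?thesis using False assms(1) by metis
  qed
  ultimately show ?thesis by simp
qed

lemma arith_pt:
  fixes pA pB cA cB iA iB nA nB n :: nat
  assumes "2 * pA + iA = (nA + 1) * cA" "2 * pB + iB = (nB + 1) * cB" "n + 1 = (nA + 1) + (nB + 1)"
  shows "2 * (pA * cB + cA * pB + iA * cB) + iB * cA = (n + 1) * cA * cB + iA * cB"
proof -
  have "(n + 1) * cA * cB = ((nA + 1) * cA) * cB + ((nB + 1) * cB) * cA"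
    using assms(3) by (simp add: algebra_simps)
  also have "\<dots> = (2 * pA + iA) * cB + (2 * pB + iB) * cA" using assms(1,2) by simp
  finally show ?thesis by (simp add: algebra_simps)
qed

lemma mul_ind: "(c::nat) * (if P then 1 else 0) = (if P then c else 0)" by simp

definition cS :: "nat set \<Rightarrow> nat" where "cS S = card (QSS S)"
definition pS :: "nat set \<Rightarrow> nat" where "pS S = (\<Sum>xs\<in>QSS S. plat' xs)"

lemma key: "finite S \<Longrightarrow> 2 * pS S + (if S = {} then 1 else 0) = (card S + 1) * cS S"
proof (induction "card S" arbitrary: S rule: less_induct)
  case less
  show ?case
  proof (cases "S = {}")
    case True
    then show ?thesis by (simp add: pS_def cS_def QSS_empty)
  next
    case False
    note fin = less.prems
    define B where "B a A = S - {a} - A" for a A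
    have fA: "finite A" if "A \<in> Pow (S - {a})" for a A using that fin finite_subset by auto
    have fB: "finite (B a A)" for a A using fin B_def by simp
    have cardA: "card A + card (B a A) + 1 = card S" if "a \<in> S" "A \<in> Pow (S - {a})" for a A
    proof -
      have "card (B a A) = card (S - {a}) - card A" unfolding B_def
        using that fA[OF that(2)] by (simp add: card_Diff_subset)
      moreover have "card A \<le> card (S - {a})" using that fin by (intro card_mono) auto
      moreover have "card (S - {a}) + 1 = card S" using that fin
        by (metis One_nat_def Suc_pred card_Diff_singleton card_gt_0_iff empty_iff add.commute plus_1_eq_Suc)
      ultimately show ?thesis by linarith
    qed
    have IHA: "2 * pS A + (if A = {} then 1 else 0) = (card A + 1) * cS A"
      if "a \<in> S" "A \<in> Pow (S - {a})" for a A
      using less(1)[of A] cardA[OF that] fA[OF that(2)] by simp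
    have IHB: "2 * pS (B a A) + (if B a A = {} then 1 else 0) = (card (B a A) + 1) * cS (B a A)"
      if "a \<in> S" "A \<in> Pow (S - {a})" for a A
      using less(1)[of "B a A"] cardA[OF that] fB by simp
    have cdec: "cS S = (\<Sum>a\<in>S. \<Sum>A\<in>Pow (S-{a}). cS A * cS (B a A))"
      unfolding cS_def card_eq_sum[of "QSS S"] sum_decomp[OF fin False] B_def
      by simp
    have inner: "(\<Sum>u\<in>QSS A. \<Sum>v\<in>QSS (B a A). plat' (a # u @ a # v))
        = pS A * cS (B a A) + cS A * pS (B a A) + (if A = {} then cS (B a A) else 0)"
      if "a \<in> S" "A \<in> Pow (S - {a})" for a A
    proof -
      have "(\<Sum>u\<in>QSS A. \<Sum>v\<in>QSS (B a A). plat' (a # u @ a # v))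
          = (\<Sum>u\<in>QSS A. \<Sum>v\<in>QSS (B a A). plat' u + plat' v + (if u = [] then 1 else 0))"
      proof (intro sum.cong refl)
        fix u v assume u: "u \<in> QSS A" and v: "v \<in> QSS (B a A)"
        have "a \<notin> set u" using QSS_set[OF fA[OF that(2)] u] that by auto
        moreover have "a \<notin> set v" using QSS_set[OF fB v] B_def by auto
        ultimately show "plat' (a # u @ a # v) = plat' u + plat' v + (if u = [] then 1 else 0)"
          by (rule plat'_split)
      qed
      also have "\<dots> = (\<Sum>u\<in>QSS A. cS (B a A) * plat' u + pS (B a A) + (if u = [] then cS (B a A) else 0))"
        by (intro sum.cong refl, cases "u = []") (simp_all add: sum.distrib pS_def cS_def)
      also have "\<dots> = cS (B a A) * pS A + cS A * pS (B a A) + (\<Sum>u\<in>QSS A. (if u = [] then cS (B a A) else 0))"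
        by (simp add: sum.distrib pS_def cS_def sum_distrib_left)
      also have "(\<Sum>u\<in>QSS A. (if u = [] then cS (B a A) else 0)) = (if A = {} then cS (B a A) else 0)"
      proof (cases "A = {}")
        case True
        then show ?thesis by (simp add: QSS_empty)
      next
        case False
        have "\<forall>u\<in>QSS A. u \<noteq> []" using QSS_Nil_iff[OF fA[OF that(2)]] False by blast
        then show ?thesis using False by simp
      qed
      finally show ?thesis by (simp add: algebra_simps)
    qed
    have pdec: "pS S = (\<Sum>a\<in>S. \<Sum>A\<in>Pow (S-{a}).
         pS A * cS (B a A) + cS A * pS (B a A) + (if A = {} then cS (B a A) else 0))"
    proof -
      have "pS S = (\<Sum>a\<in>S. \<Sum>A\<in>Pow (S-{a}). \<Sum>u\<in>QSS A. \<Sum>v\<in>QSS (B a A). plat' (a # u @ a # v))"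
        unfolding pS_def sum_decomp[OF fin False] B_def by simp
      also have "\<dots> = (\<Sum>a\<in>S. \<Sum>A\<in>Pow (S-{a}).
         pS A * cS (B a A) + cS A * pS (B a A) + (if A = {} then cS (B a A) else 0))"
        by (intro sum.cong refl inner)
      finally show ?thesis .
    qed
    have per: "(\<Sum>A\<in>Pow (S-{a}). 2 * (pS A * cS (B a A) + cS A * pS (B a A) + (if A = {} then cS (B a A) else 0)))
             = (\<Sum>A\<in>Pow (S-{a}). (card S + 1) * cS A * cS (B a A))" if a: "a \<in> S" for a
    proof -
      have "(\<Sum>A\<in>Pow (S-{a}). 2 * (pS A * cS (B a A) + cS A * pS (B a A) + (if A = {} then cS (B a A) else 0)) + (if B a A = {} then 1 else 0) * cS A)
          = (\<Sum>A\<in>Pow (S-{a}). (card S + 1) * cS A * cS (B a A) + (if A = {} then 1 else 0) * cS (B a A))"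
      proof (intro sum.cong refl)
        fix A assume A: "A \<in> Pow (S - {a})"
        have "card S + 1 = (card A + 1) + (card (B a A) + 1)" using cardA[OF a A] by simp
        from arith_pt[OF IHA[OF a A] IHB[OF a A] this]
        show "2 * (pS A * cS (B a A) + cS A * pS (B a A) + (if A = {} then cS (B a A) else 0)) + (if B a A = {} then 1 else 0) * cS A
          = (card S + 1) * cS A * cS (B a A) + (if A = {} then 1 else 0) * cS (B a A)"
          by (cases "A = {}") simp_all
      qed
      moreover have "(\<Sum>A\<in>Pow (S-{a}). (if B a A = {} then 1 else 0) * cS A) = cS (S - {a})"
      proof -
        have "(\<Sum>A\<in>Pow (S-{a}). (if B a A = {} then 1 else 0) * cS A) = (\<Sum>A\<in>Pow (S-{a}). if A = S - {a} then cS A else 0)"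
          by (intro sum.cong refl) (auto simp: B_def)
        also have "\<dots> = cS (S - {a})" by (simp add: sum.delta' fin)
        finally show ?thesis .
      qed
      moreover have "(\<Sum>A\<in>Pow (S-{a}). (if A = {} then 1 else 0) * cS (B a A)) = cS (S - {a})"
      proof -
        have "(\<Sum>A\<in>Pow (S-{a}). (if A = {} then 1 else 0) * cS (B a A)) = (\<Sum>A\<in>Pow (S-{a}). if A = {} then cS (B a A) else 0)"
          by (intro sum.cong refl) auto
        also have "\<dots> = cS (S - {a})" by (simp add: sum.delta fin B_def)
        finally show ?thesis .
      qed
      ultimately show ?thesis by (simp add: sum.distrib)
    qed
    have "2 * pS S = (\<Sum>a\<in>S. \<Sum>A\<in>Pow (S-{a}). 2 * (pS A * cS (B a A) + cS A * pS (B a A) + (if A = {} then cS (B a A) else 0)))"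
      unfolding pdec by (simp add: sum_distrib_left)
    also have "\<dots> = (\<Sum>a\<in>S. \<Sum>A\<in>Pow (S-{a}). (card S + 1) * cS A * cS (B a A))"
      by (intro sum.cong refl per)
    also have "\<dots> = (card S + 1) * cS S"
      unfolding cdec sum_distrib_left by (simp add: algebra_simps)
    finally show ?thesis using False by simp
  qed
qed



lemma asc_eq: assumes "xs \<noteq> []"
  shows "asc xs = Suc (card {i \<in> {1..<length xs}. xs ! (i - 1) < xs ! i})"
proof -
  have "{i \<in> {0..<length xs}. i = 0 \<or> xs ! (i - 1) < xs ! i} = insert 0 {i \<in> {1..<length xs}. xs ! (i - 1) < xs ! i}"
    using assms by auto
  then show ?thesis unfolding asc_def by simp
qed

lemma des_eq: assumes "xs \<noteq> []"
  shows "des xs = Suc (card {i \<in> {1..<length xs}. xs ! (i - 1) > xs ! i})"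
proof -
  have "1 \<le> length xs" using assms by (cases xs) auto
  then have "{i \<in> {1..length xs}. i = length xs \<or> xs ! (i - 1) > xs ! i} = insert (length xs) {i \<in> {1..<length xs}. xs ! (i - 1) > xs ! i}"
    by auto
  then show ?thesis unfolding des_def by simp
qed

lemma plat_set: "plat xs = card {i \<in> {1..<length xs}. xs ! (i - 1) = xs ! i}"
  by (simp add: plat_def)

lemma three: assumes "xs \<noteq> []" shows "asc xs + des xs + plat xs = length xs + 1"
proof -
  define L where "L = {i \<in> {1..<length xs}. xs ! (i - 1) < xs ! i}"
  define G where "G = {i \<in> {1..<length xs}. xs ! (i - 1) > xs ! i}"
  define E where "E = {i \<in> {1..<length xs}. xs ! (i - 1) = xs ! i}"
  have u: "L \<union> G \<union> E = {1..<length xs}" unfolding L_def G_def E_def by auto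
  have "card (L \<union> G \<union> E) = card L + card G + card E"
    by (subst card_Un_disjoint; (subst card_Un_disjoint)?) (auto simp: L_def G_def E_def)
  then have "card L + card G + card E = length xs - 1" using u by simp
  then show ?thesis using asc_eq[OF assms] des_eq[OF assms] plat_set[of xs] assms
    unfolding L_def G_def E_def by (cases xs) auto
qed

lemma crs_rev: assumes "crs (rev xs)" shows "crs xs"
proof -
  define n where "n = length xs"
  obtain i j k l where h: "i < j" "j < k" "k < l" "l < length (rev xs)"
     "rev xs ! i = rev xs ! k" "rev xs ! j = rev xs ! l"
    using assms unfolding crs_def by blast
  have r: "t < n \<Longrightarrow> rev xs ! t = xs ! (n - 1 - t)" for t by (simp add: rev_nth n_def)
  show ?thesis unfolding crs_def
    by (rule exI[of _ "n - 1 - l"], rule exI[of _ "n - 1 - k"], rule exI[of _ "n - 1 - j"],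
        rule exI[of _ "n - 1 - i"]) (use h r n_def in auto)
qed

lemma rev_QSS: "xs \<in> QSS S \<Longrightarrow> rev xs \<in> QSS S"
  unfolding QSS_def using crs_rev by auto

lemma asc_rev: assumes "xs \<noteq> []" shows "asc (rev xs) = des xs"
proof -
  define n where "n = length xs"
  have r: "t < n \<Longrightarrow> rev xs ! t = xs ! (n - 1 - t)" for t by (simp add: rev_nth n_def)
  have "bij_betw (\<lambda>i. n - i) {i \<in> {1..<n}. rev xs ! (i - 1) < rev xs ! i} {i \<in> {1..<n}. xs ! (i - 1) > xs ! i}"
  proof (rule bij_betw_byWitness[where f'="\<lambda>i. n - i"])
    show "\<forall>a\<in>{i \<in> {1..<n}. rev xs ! (i - 1) < rev xs ! i}. n - (n - a) = a" by auto
    show "\<forall>a\<in>{i \<in> {1..<n}. xs ! (i - 1) > xs ! i}. n - (n - a) = a" by auto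
    show "(\<lambda>i. n - i) ` {i \<in> {1..<n}. rev xs ! (i - 1) < rev xs ! i} \<subseteq> {i \<in> {1..<n}. xs ! (i - 1) > xs ! i}"
    proof
      fix y assume "y \<in> (\<lambda>i. n - i) ` {i \<in> {1..<n}. rev xs ! (i - 1) < rev xs ! i}"
      then obtain i where i: "i \<in> {1..<n}" "rev xs ! (i - 1) < rev xs ! i" "y = n - i" by auto
      have "i - 1 < n" using i by auto
      then have "rev xs ! (i - 1) = xs ! (n - i)" using r[of "i - 1"] i by simp
      moreover have "rev xs ! i = xs ! (n - i - 1)" using r[of i] i by simp
      ultimately show "y \<in> {i \<in> {1..<n}. xs ! (i - 1) > xs ! i}" using i by auto
    qed
    show "(\<lambda>i. n - i) ` {i \<in> {1..<n}. xs ! (i - 1) > xs ! i} \<subseteq> {i \<in> {1..<n}. rev xs ! (i - 1) < rev xs ! i}"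
    proof
      fix y assume "y \<in> (\<lambda>i. n - i) ` {i \<in> {1..<n}. xs ! (i - 1) > xs ! i}"
      then obtain i where i: "i \<in> {1..<n}" "xs ! (i - 1) > xs ! i" "y = n - i" by auto
      have "rev xs ! (y - 1) = xs ! i" using r[of "y - 1"] i by simp
      moreover have "rev xs ! y = xs ! (i - 1)" using r[of y] i by simp
      ultimately show "y \<in> {i \<in> {1..<n}. rev xs ! (i - 1) < rev xs ! i}" using i by auto
    qed
  qed
  then have "card {i \<in> {1..<n}. rev xs ! (i - 1) < rev xs ! i} = card {i \<in> {1..<n}. xs ! (i - 1) > xs ! i}"
    by (rule bij_betw_same_card)
  then show ?thesis using asc_eq[of "rev xs"] des_eq[of xs] assms n_def by simp
qed

lemma QS_eq: "QS n = QSS {1..n}"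
proof -
  have e: "{1..<n+1} = {1..n}" by auto
  have "mset [1..<n+1] = mset_set {1..<n+1}" by (rule mset_upt)
  then have "mset [1..<n+1] = mset_set {1..n}" unfolding e .
  then have "mset ([1..<n+1] @ [1..<n+1]) = mset_set {1..n} + mset_set {1..n}"
    by (simp only: mset_append)
  then show ?thesis unfolding QS_def QSS_def quasi_stirling_def crs_def by simp
qed

theorem corollary3p1:
  fixes n :: nat
  assumes "n \<ge> 1"
  shows "(\<Sum>xs\<in>QS n. real (asc xs)) / real (card (QS n)) = (3 * real n + 1) / 4
       \<and> (\<Sum>xs\<in>QS n. real (des xs)) / real (card (QS n)) = (3 * real n + 1) / 4
       \<and> (\<Sum>xs\<in>QS n. real (plat xs)) / real (card (QS n)) = (real n + 1) / 2"
proof -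
  define S where "S = {1..n}"
  define Q where "Q = QSS S"
  have Qd: "QS n = Q" unfolding Q_def S_def QS_eq ..
  have fin: "finite S" unfolding S_def by simp
  have ne: "S \<noteq> {}" unfolding S_def using assms by auto
  have cS: "card S = n" unfolding S_def by simp
  have fQ: "finite Q" unfolding Q_def using QSS_finite[OF fin] .
  have N: "card Q > 0" using QSS_nonempty[OF fin] fQ unfolding Q_def by (simp add: card_gt_0_iff)
  have lenQ: "xs \<in> Q \<Longrightarrow> length xs = 2 * n" for xs using QSS_len[OF fin] cS Q_def by simp
  have nilQ: "xs \<in> Q \<Longrightarrow> xs \<noteq> []" for xs using lenQ[of xs] assms by auto
  have P: "2 * (\<Sum>xs\<in>Q. plat xs) = (n + 1) * card Q"
    using key[OF fin] ne cS unfolding pS_def cS_def Q_def by (simp add: plat_eq)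
  have T: "(\<Sum>xs\<in>Q. asc xs) + (\<Sum>xs\<in>Q. des xs) + (\<Sum>xs\<in>Q. plat xs) = (2 * n + 1) * card Q"
  proof -
    have "(\<Sum>xs\<in>Q. asc xs) + (\<Sum>xs\<in>Q. des xs) + (\<Sum>xs\<in>Q. plat xs) = (\<Sum>xs\<in>Q. asc xs + des xs + plat xs)"
      by (simp add: sum.distrib)
    also have "\<dots> = (\<Sum>xs\<in>Q. 2 * n + 1)" using three nilQ lenQ by (intro sum.cong refl) auto
    finally show ?thesis by simp
  qed
  have AD: "(\<Sum>xs\<in>Q. asc xs) = (\<Sum>xs\<in>Q. des xs)"
  proof -
    have b: "bij_betw rev Q Q"
      by (rule bij_betw_byWitness[where f'=rev]) (auto simp: Q_def rev_QSS)
    have "(\<Sum>xs\<in>Q. asc xs) = (\<Sum>xs\<in>Q. asc (rev xs))"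
      using sum.reindex_bij_betw[OF b, of asc] by simp
    also have "\<dots> = (\<Sum>xs\<in>Q. des xs)" using asc_rev nilQ by (intro sum.cong refl) auto
    finally show ?thesis .
  qed
  define a where "a = real (\<Sum>xs\<in>Q. asc xs)"
  define d where "d = real (\<Sum>xs\<in>Q. des xs)"
  define p where "p = real (\<Sum>xs\<in>Q. plat xs)"
  define c where "c = real (card Q)"
  have c0: "c > 0" using N c_def by simp
  have e1: "2 * p = (real n + 1) * c" unfolding p_def c_def using arg_cong[OF P, of real] by (simp add: algebra_simps)
  have e2: "a + d + p = (2 * real n + 1) * c" unfolding a_def d_def p_def c_def using arg_cong[OF T, of real] by (simp add: algebra_simps)
  have e3: "a = d" unfolding a_def d_def using AD by simp
  have ra: "(\<Sum>xs\<in>Q. real (asc xs)) = a" unfolding a_def by simp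
  have rd: "(\<Sum>xs\<in>Q. real (des xs)) = d" unfolding d_def by simp
  have rp: "(\<Sum>xs\<in>Q. real (plat xs)) = p" unfolding p_def by simp
  have fa: "a = (3 * real n + 1) / 4 * c" using e1 e2 e3 by (simp add: field_simps)
  show ?thesis unfolding Qd ra rd rp c_def[symmetric] using c0 e1 e3 fa by (simp add: field_simps)
qed

end
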